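(* Let $X$ be a separable Banach space. There exists a sequence $(a_k)_{k\ge 0}$ of elements of $X$ such that: (1) for every infinite set $A\subset\mathbb{N}$, the closed linear span of $\{a_k : k\in A\}$ equals $X$; (2) for every bounded linear operator $T:X\to X$, setting $\eta=\{k\ge 0: Ta_k\neq 0\}$, the family $\big(Ta_k/\|Ta_k\|\big)_{k\in\eta}$ is relatively compact in $X$.
   Context: "span" denotes the closed linear span. *)

theory Defs
  imports "HOL-Analysis.Analysis"
begin

end

theory Submission imports Defs "HOL-Real_Asymp.Real_Asymp" begin

lemma subspace_closure_my:
  fixes S :: "'a::real_normed_vector set"
  assumes "subspace S" shows "subspace (closure S)"
  unfolding subspace_def
proof (intro conjI ballI allI)
  show "0 \<in> closure S" using assms closure_subset subspace_0 by blast
next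
  fix x y assume "x \<in> closure S" "y \<in> closure S"
  then obtain f g where f: "\<And>n. f n \<in> S" "f \<longlonglongrightarrow> x" and g: "\<And>n. g n \<in> S" "g \<longlonglongrightarrow> y"
    by (meson closure_sequential)
  have "(\<lambda>n. f n + g n) \<longlonglongrightarrow> x + y" using f g by (intro tendsto_add) auto
  moreover have "\<And>n. f n + g n \<in> S" using f g assms subspace_add by blast
  ultimately show "x + y \<in> closure S" by (meson closure_sequential)
next
  fix c :: real and x assume "x \<in> closure S"
  then obtain f where f: "\<And>n. f n \<in> S" "f \<longlonglongrightarrow> x"
    by (meson closure_sequential)
  have "(\<lambda>n. c *\<^sub>R f n) \<longlonglongrightarrow> c *\<^sub>R x" using f by (intro tendsto_scaleR) auto
  moreover have "\<And>n. c *\<^sub>R f n \<in> S" using f assms subspace_scale by blast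
  ultimately show "c *\<^sub>R x \<in> closure S" by (meson closure_sequential)
qed

context
  fixes x :: "nat \<Rightarrow> 'a::banach"
  assumes nx: "\<And>n. norm (x n) \<le> 1"
begin

definition r :: "nat \<Rightarrow> real \<Rightarrow> 'a" where
  "r m s = (\<Sum>n. s^n *\<^sub>R x (n+m))"

lemma r_summable: "\<bar>s\<bar> < 1 \<Longrightarrow> summable (\<lambda>n. s^n *\<^sub>R x (n+m))"
  and r_summable_norm: "\<bar>s\<bar> < 1 \<Longrightarrow> summable (\<lambda>n. norm (s^n *\<^sub>R x (n+m)))"
proof -
  assume s: "\<bar>s\<bar> < 1"
  have b: "norm (norm (s^n *\<^sub>R x (n+m))) \<le> \<bar>s\<bar>^n" for n
    using nx[of "n+m"] by (simp add: power_abs mult_left_le)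
  have "summable (\<lambda>n. \<bar>s\<bar>^n)" using s by (simp add: summable_geometric)
  then show sn: "summable (\<lambda>n. norm (s^n *\<^sub>R x (n+m)))"
    by (rule summable_comparison_test'[where N=0]) (use b in auto)
  then show "summable (\<lambda>n. s^n *\<^sub>R x (n+m))" by (rule summable_norm_cancel)
qed

lemma r_step: assumes "\<bar>s\<bar> < 1" shows "r m s = x m + s *\<^sub>R r (Suc m) s"
proof -
  have sm: "summable (\<lambda>n. s^n *\<^sub>R x (n+m))" using r_summable assms .
  have "r m s = (\<Sum>n. s^(Suc n) *\<^sub>R x (Suc n+m)) + x m"
    unfolding r_def using suminf_split_head[OF sm] by simp
  also have "(\<Sum>n. s^(Suc n) *\<^sub>R x (Suc n+m)) = (\<Sum>n. s *\<^sub>R (s^n *\<^sub>R x (n+Suc m)))"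
    by simp
  also have "\<dots> = s *\<^sub>R r (Suc m) s"
    unfolding r_def using suminf_scaleR_right[OF r_summable[OF assms, of "Suc m"]] by simp
  finally show ?thesis by simp
qed

lemma r_norm: assumes "\<bar>s\<bar> \<le> 1/2" shows "norm (r m s) \<le> 2"
proof -
  have s: "\<bar>s\<bar> < 1" using assms by simp
  have "norm (r m s) \<le> (\<Sum>n. norm (s^n *\<^sub>R x (n+m)))"
    unfolding r_def by (rule summable_norm[OF r_summable_norm[OF s]])
  also have "\<dots> \<le> (\<Sum>n. \<bar>s\<bar>^n)"
  proof (rule suminf_le)
    show "summable (\<lambda>n. norm (s^n *\<^sub>R x (n+m)))" using r_summable_norm[OF s] .
    show "summable (\<lambda>n. \<bar>s\<bar>^n)" using s by (simp add: summable_geometric)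
    show "\<And>n. norm (s^n *\<^sub>R x (n+m)) \<le> \<bar>s\<bar>^n"
      using nx by (simp add: power_abs mult_left_le)
  qed
  also have "\<dots> = 1 / (1 - \<bar>s\<bar>)" using suminf_geometric[of "\<bar>s\<bar>"] s by simp
  also have "\<dots> \<le> 2" using assms by (simp add: field_simps)
  finally show ?thesis .
qed

lemma r_close: assumes "\<bar>s\<bar> \<le> 1/2" shows "norm (r m s - x m) \<le> 2 * \<bar>s\<bar>"
proof -
  have "\<bar>s\<bar> < 1" using assms by simp
  then have "r m s = x m + s *\<^sub>R r (Suc m) s" by (rule r_step)
  then have "r m s - x m = s *\<^sub>R r (Suc m) s" by simp
  then have "norm (r m s - x m) = \<bar>s\<bar> * norm (r (Suc m) s)" by simp
  also have "\<dots> \<le> \<bar>s\<bar> * 2" by (rule mult_left_mono[OF r_norm[OF assms]]) simp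
  finally show ?thesis by simp
qed

lemma r_lim: assumes "\<And>j. \<bar>s j\<bar> \<le> 1/2" "s \<longlonglongrightarrow> 0"
  shows "(\<lambda>j. r m (s j)) \<longlonglongrightarrow> x m"
proof -
  have "(\<lambda>j. r m (s j) - x m) \<longlonglongrightarrow> 0"
  proof (rule Lim_null_comparison)
    show "\<forall>\<^sub>F j in sequentially. norm (r m (s j) - x m) \<le> 2 * \<bar>s j\<bar>"
      using r_close assms(1) by auto
    have "(\<lambda>j. \<bar>s j\<bar>) \<longlonglongrightarrow> 0" using assms(2) by (rule tendsto_rabs_zero)
    then show "(\<lambda>j. 2 * \<bar>s j\<bar>) \<longlonglongrightarrow> 0" using tendsto_mult_right_zero by blast
  qed
  then show ?thesis using Lim_null by blast
qed

end

lemma scale_norm_pos: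
  fixes y :: "'a::real_normed_vector"
  assumes "c > 0" shows "inverse (norm (c *\<^sub>R y)) *\<^sub>R (c *\<^sub>R y) = inverse (norm y) *\<^sub>R y"
  using assms by (simp add: field_simps)

theorem mainTheorem1:
  fixes dummy :: "'a :: banach"
  assumes "separable_space (euclidean :: 'a topology)"
  shows "\<exists>a :: nat \<Rightarrow> 'a.
           (\<forall>A. infinite A \<longrightarrow> closure (span (a ` A)) = UNIV) \<and>
           (\<forall>T :: 'a \<Rightarrow> 'a. bounded_linear T \<longrightarrow>
              compact (closure ((\<lambda>k. scaleR (inverse (norm (T (a k)))) (T (a k)))
                                  ` {k. T (a k) \<noteq> 0})))"
proof -
  obtain D :: "'a set" where D: "countable D" "closure D = UNIV"
    using assms unfolding separable_space_def by auto
  have "D \<noteq> {}" using D by auto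
  define d where "d = from_nat_into D"
  have rd: "range d = D" unfolding d_def using D \<open>D \<noteq> {}\<close> by simp
  define x where "x n = inverse (1 + norm (d n)) *\<^sub>R d n" for n
  have nx: "\<And>n. norm (x n) \<le> 1"
  proof -
    fix n
    have p: "0 < 1 + norm (d n)" by (simp add: add_pos_nonneg)
    have "norm (x n) = norm (d n) / (1 + norm (d n))" unfolding x_def by (simp add: divide_inverse_commute)
    also have "\<dots> \<le> 1" using p by (simp add: divide_le_eq)
    finally show "norm (x n) \<le> 1" .
  qed
  have "D \<subseteq> span (range x)"
  proof
    fix z assume "z \<in> D"
    then obtain n where "z = d n" using rd by auto
    have "d n = (1 + norm (d n)) *\<^sub>R x n"
    proof -
      have p: "1 + norm (d n) \<noteq> 0" by (metis add_pos_nonneg norm_ge_zero zero_less_one less_irrefl)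
      show ?thesis unfolding x_def using p by simp
    qed
    then show "z \<in> span (range x)" using \<open>z = d n\<close>
      by (metis rangeI span_base span_mul)
  qed
  then have hx: "closure (span (range x)) = UNIV"
    using D closure_mono by blast
  define t :: "nat \<Rightarrow> real" where "t k = inverse (real k + 2)" for k
  have tpos: "\<And>k. t k > 0" and tle: "\<And>k. \<bar>t k\<bar> \<le> 1/2"
    unfolding t_def by (auto simp: field_simps)
  have tlim: "t \<longlonglongrightarrow> 0" unfolding t_def by real_asymp
  define a where "a k = r x 0 (t k)" for k
  have part1: "closure (span (a ` A)) = UNIV" if "infinite A" for A
  proof -
    define S where "S = closure (span (a ` A))"
    have sS: "subspace S" unfolding S_def by (simp add: subspace_closure_my)
    have cS: "closed S" unfolding S_def by simp
    define e where "e = enumerate A"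
    have se: "strict_mono e" unfolding e_def using that
      by (simp add: enumerate_mono strict_monoI)
    have eA: "e j \<in> A" for j unfolding e_def using that by (rule enumerate_in_set)
    have lim: "x m \<in> S" if "\<forall>k\<in>A. r x m (t k) \<in> S" for m
    proof -
      have "(t \<circ> e) \<longlonglongrightarrow> 0" using LIMSEQ_subseq_LIMSEQ[OF tlim se] .
      moreover have "\<And>j. \<bar>(t \<circ> e) j\<bar> \<le> 1/2" using tle by simp
      ultimately have l1: "(\<lambda>j. r x m ((t \<circ> e) j)) \<longlonglongrightarrow> x m"
        using r_lim[where x=x and s="t \<circ> e" and m=m, OF nx] by blast
      have l2: "\<And>j. r x m ((t \<circ> e) j) \<in> S" using that eA by auto
      show ?thesis by (rule closed_sequentially[OF cS l2 l1])
    qed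
    have P: "\<forall>k\<in>A. r x m (t k) \<in> S" for m
    proof (induction m)
      case 0
      show ?case
      proof
        fix k assume "k \<in> A"
        then have "a k \<in> span (a ` A)" by (intro span_base imageI)
        then have "a k \<in> S" unfolding S_def using closure_subset by blast
        then show "r x 0 (t k) \<in> S" unfolding a_def .
      qed
    next
      case (Suc m)
      have xm: "x m \<in> S" by (rule lim[OF Suc])
      show ?case
      proof
        fix k assume "k \<in> A"
        have "\<bar>t k\<bar> < 1" using tle[of k] by simp
        then have "r x m (t k) = x m + t k *\<^sub>R r x (Suc m) (t k)" by (rule r_step[where x=x, OF nx])
        then have "r x (Suc m) (t k) = inverse (t k) *\<^sub>R (r x m (t k) - x m)"
          using tpos[of k] by simp
        then show "r x (Suc m) (t k) \<in> S"
          using Suc \<open>k \<in> A\<close> xm sS by (simp add: subspace_diff subspace_scale)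
      qed
    qed
    have "range x \<subseteq> S" using P lim by blast
    then have "span (range x) \<subseteq> S" using sS by (rule span_minimal)
    then have "closure (span (range x)) \<subseteq> S" using cS by (rule closure_minimal)
    then show ?thesis using hx S_def by auto
  qed
  have part2: "compact (closure ((\<lambda>k. scaleR (inverse (norm (T (a k)))) (T (a k)))
                                  ` {k. T (a k) \<noteq> 0}))" if T: "bounded_linear T" for T
  proof (cases "\<forall>n. T (x n) = 0")
    case True
    have "T (a k) = 0" for k
    proof -
      have "\<bar>t k\<bar> < 1" using tle[of k] by simp
      then have sm: "summable (\<lambda>n. t k ^ n *\<^sub>R x (n + 0))" by (rule r_summable[where x=x, OF nx])
      have "a k = (\<Sum>n. t k ^ n *\<^sub>R x (n + 0))" unfolding a_def by (simp add: r_def[where x=x, OF nx])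
      then have "T (a k) = (\<Sum>n. T (t k ^ n *\<^sub>R x (n + 0)))"
        using bounded_linear.suminf[OF T sm] by simp
      also have "\<dots> = 0" using True by (simp add: linear_cmul[OF bounded_linear.linear[OF T]])
      finally show ?thesis .
    qed
    then have "{k. T (a k) \<noteq> 0} = {}" by simp
    then show ?thesis by (simp only: image_empty closure_empty compact_empty)
  next
    case False
    define m where "m = (LEAST n. T (x n) \<noteq> 0)"
    have Tm: "T (x m) \<noteq> 0" unfolding m_def by (rule LeastI_ex) (use False in auto)
    have Tj: "T (x j) = 0" if "j < m" for j using that unfolding m_def using not_less_Least by blast
    have red: "j \<le> m \<longrightarrow> T (a k) = t k ^ j *\<^sub>R T (r x j (t k))" for j k
    proof (induction j)
      case 0
      then show ?case unfolding a_def by simp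
    next
      case (Suc j)
      show ?case
      proof
        assume "Suc j \<le> m"
        have "\<bar>t k\<bar> < 1" using tle[of k] by simp
        then have "r x j (t k) = x j + t k *\<^sub>R r x (Suc j) (t k)" by (rule r_step[where x=x, OF nx])
        then have "T (r x j (t k)) = t k *\<^sub>R T (r x (Suc j) (t k))"
          using Tj[of j] \<open>Suc j \<le> m\<close>
          by (simp add: linear_cmul[OF bounded_linear.linear[OF T]] linear_add[OF bounded_linear.linear[OF T]])
        then show "T (a k) = t k ^ Suc j *\<^sub>R T (r x (Suc j) (t k))"
          using Suc \<open>Suc j \<le> m\<close> by simp
      qed
    qed
    define y where "y k = T (r x m (t k))" for k
    have ylim: "y \<longlonglongrightarrow> T (x m)" unfolding y_def
      using bounded_linear.tendsto[OF T r_lim[where x=x and m=m, OF nx tle tlim]] .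
    define u where "u k = inverse (norm (y k)) *\<^sub>R y k" for k
    define v where "v = inverse (norm (T (x m))) *\<^sub>R T (x m)"
    have ulim: "u \<longlonglongrightarrow> v" unfolding u_def v_def
      using Tm by (intro tendsto_intros ylim) auto
    have sub: "(\<lambda>k. scaleR (inverse (norm (T (a k)))) (T (a k))) ` {k. T (a k) \<noteq> 0} \<subseteq> range u"
    proof
      fix z assume "z \<in> (\<lambda>k. scaleR (inverse (norm (T (a k)))) (T (a k))) ` {k. T (a k) \<noteq> 0}"
      then obtain k where z: "z = scaleR (inverse (norm (T (a k)))) (T (a k))" by auto
      have "T (a k) = t k ^ m *\<^sub>R y k" using red[of m k] unfolding y_def by simp
      then have "z = u k" unfolding z u_def using tpos[of k] by (simp add: scale_norm_pos)
      then show "z \<in> range u" by simp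
    qed
    have K: "compact (insert v (range u))"
      using compactin_sequence_with_limit[of euclidean u v "range u"] ulim by simp
    define Z where "Z = closure ((\<lambda>k. scaleR (inverse (norm (T (a k)))) (T (a k))) ` {k. T (a k) \<noteq> 0})"
    have "Z \<subseteq> insert v (range u)"
      unfolding Z_def using sub K by (meson closure_minimal compact_imp_closed subset_insertI2)
    then have "insert v (range u) \<inter> Z = Z" by blast
    moreover have "compact (insert v (range u) \<inter> Z)"
      using compact_Int_closed[OF K, of Z] unfolding Z_def by simp
    ultimately show ?thesis unfolding Z_def by simp
  qed
  show ?thesis using part1 part2 by blast
qed

end
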